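(* Under the standing assumptions with Gaussian signaling $x\sim\mathcal{CN}(0,1)$, so that $\hat\phi(\rho)=1/(1+\rho)$, and $\mathbf A\neq\mathbf 0$ in the limit (i.e. $\hat\gamma(1)<1$), the equation $\hat\phi(\rho)=\eta^{-1}(\rho)$ has a unique positive solution, namely $$\rho^*_{\rm Gau}=[\hat\gamma(1)]^{-1}-1.$$
   Context: Standing assumptions (LUIS): $M,N\to\infty$ with $\beta=N/M$ fixed; $\mathbf A\in\mathbb C^{M\times N}$ right-unitarily invariant with the empirical eigenvalue distribution of $\mathbf A^{\mathrm H}\mathbf A$ converging to a compactly supported limit, $\frac1N\mathrm{tr}(\mathbf A^{\mathrm H}\mathbf A)\to1$; normalized traces denote large-system limits; $snr>0$. $\hat\phi(\rho)=\mathrm E|x-\mathrm E[x\mid\sqrt\rho x+z]|^2$ with $z\sim\mathcal{CN}(0,1)$ independent of $x$. $\hat\gamma(v)=\frac1N\mathrm{tr}\{(snr\,\mathbf A^{\mathrm H}\mathbf A+v^{-1}\mathbf I)^{-1}\}$ for $v>0$ (strictly increasing, inverse $\hat\gamma^{-1}$); $\eta(v)=v^{-1}-[\hat\gamma^{-1}(v)]^{-1}$, with inverse $\eta^{-1}$. *)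

theory Defs
  imports "HOL-Probability.Probability"
begin

text \<open>The large-system limit of the empirical eigenvalue distribution of A^H A is modelled
  by a probability measure M on the reals; normalized traces become integrals against M.\<close>

definition gamma_hat :: "real measure \<Rightarrow> real \<Rightarrow> real \<Rightarrow> real" where
  "gamma_hat M snr v = (\<integral>lam. 1 / (snr * lam + 1 / v) \<partial>M)"

definition gamma_hat_inv :: "real measure \<Rightarrow> real \<Rightarrow> real \<Rightarrow> real" where
  "gamma_hat_inv M snr = the_inv_into {0<..} (gamma_hat M snr)"

definition eta :: "real measure \<Rightarrow> real \<Rightarrow> real \<Rightarrow> real" where
  "eta M snr v = 1 / v - 1 / gamma_hat_inv M snr v"

text \<open>Domain of eta = domain of the inverse of gamma_hat = range of gamma_hat on v > 0.\<close>
definition eta_dom :: "real measure \<Rightarrow> real \<Rightarrow> real set" where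
  "eta_dom M snr = gamma_hat M snr ` {0<..}"

definition eta_inv :: "real measure \<Rightarrow> real \<Rightarrow> real \<Rightarrow> real" where
  "eta_inv M snr = the_inv_into (eta_dom M snr) (eta M snr)"

definition phi_gau :: "real \<Rightarrow> real" where
  "phi_gau rho = 1 / (1 + rho)"

end

theory Submission
  imports Defs
begin

lemma gh_integrable:
  fixes M :: "real measure" and snr v :: real
  assumes "prob_space M" "sets M = sets borel" "AE lam in M. lam \<ge> 0" "snr > 0" "v > 0"
  shows "integrable M (\<lambda>lam. 1 / (snr * lam + 1 / v))"
proof -
  interpret prob_space M by fact
  have m0: "(\<lambda>lam::real. 1 / (snr * lam + 1 / v)) \<in> borel_measurable borel" by measurable
  have meas: "(\<lambda>lam::real. 1 / (snr * lam + 1 / v)) \<in> borel_measurable M"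
    using m0 by (simp add: measurable_cong_sets[OF assms(2) refl])
  have "AE lam in M. norm (1 / (snr * lam + 1 / v)) \<le> v"
    using assms(3)
  proof (rule eventually_mono)
    fix lam :: real assume l: "lam \<ge> 0"
    have p: "snr * lam \<ge> 0" using l assms by simp
    have a: "1 / v \<le> snr * lam + 1/v" using p by simp
    have b: "0 < snr * lam + 1 / v" using p assms(5) by (intro add_nonneg_pos) auto
    have c: "0 < 1 / v" using assms(5) by simp
    have "1 / (snr * lam + 1 / v) \<le> 1 / (1/v)"
      by (rule divide_left_mono[OF a _ mult_pos_pos[OF b c]]) simp
    moreover have "1 / (snr * lam + 1 / v) \<ge> 0" using p assms(5) by simp
    ultimately show "norm (1 / (snr * lam + 1 / v)) \<le> v" using assms(5) by simp
  qed
  then show ?thesis using meas by (intro integrable_const_bound) auto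
qed

lemma gh_strict:
  fixes M :: "real measure" and snr v w :: real
  assumes "prob_space M" "sets M = sets borel" "AE lam in M. lam \<ge> 0" "snr > 0" "0 < v" "v < w"
  shows "gamma_hat M snr v < gamma_hat M snr w"
proof -
  interpret prob_space M by fact
  show ?thesis unfolding gamma_hat_def
  proof (rule integral_less_AE_space)
    show "integrable M (\<lambda>lam. 1 / (snr * lam + 1 / v))" using gh_integrable assms by auto
    show "integrable M (\<lambda>lam. 1 / (snr * lam + 1 / w))" using gh_integrable assms by auto
    show "emeasure M (space M) \<noteq> 0" by (simp add: emeasure_space_1)
    show "AE lam in M. 1 / (snr * lam + 1 / v) < 1 / (snr * lam + 1 / w)"
      using assms(3)
    proof (rule eventually_mono)
      fix lam :: real assume l: "lam \<ge> 0"
      have p: "snr * lam \<ge> 0" using l assms by simp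
      have "1/w < 1/v" using assms by (simp add: frac_less2)
      then show "1 / (snr * lam + 1 / v) < 1 / (snr * lam + 1 / w)"
      proof (intro divide_strict_left_mono)
        have "0 < snr * lam + 1 / v" using p assms by (intro add_nonneg_pos) auto
        moreover have "0 < snr * lam + 1 / w" using p assms by (intro add_nonneg_pos) auto
        ultimately show "0 < (snr * lam + 1 / v) * (snr * lam + 1 / w)" by simp
      qed (use \<open>1/w < 1/v\<close> in auto)
    qed
  qed
qed

lemma gh_pos:
  fixes M :: "real measure" and snr v :: real
  assumes "prob_space M" "sets M = sets borel" "AE lam in M. lam \<ge> 0" "snr > 0" "0 < v"
  shows "0 < gamma_hat M snr v"
proof -
  interpret prob_space M by fact
  have "(\<integral>lam. 0 \<partial>M) < (\<integral>lam. 1 / (snr * lam + 1 / v) \<partial>M)"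
  proof (rule integral_less_AE_space)
    show "integrable M (\<lambda>lam. 1 / (snr * lam + 1 / v))" using gh_integrable assms by auto
    show "integrable M (\<lambda>lam. 0::real)" by simp
    show "emeasure M (space M) \<noteq> 0" by (simp add: emeasure_space_1)
    show "AE lam in M. 0 < 1 / (snr * lam + 1 / v)"
      using assms(3)
    proof (rule eventually_mono)
      fix x :: real assume "0 \<le> x"
      hence "0 \<le> snr * x" using assms by simp
      moreover have "0 < 1 / v" using assms by simp
      ultimately have "0 < snr * x + 1 / v" by (rule add_nonneg_pos)
      then show "0 < 1 / (snr * x + 1 / v)" by simp
    qed
  qed
  then show ?thesis unfolding gamma_hat_def by simp
qed

lemma gh_inj:
  fixes M :: "real measure" and snr :: real
  assumes "prob_space M" "sets M = sets borel" "AE lam in M. lam \<ge> 0" "snr > 0"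
  shows "inj_on (gamma_hat M snr) {0<..}"
proof (rule inj_onI)
  fix x y assume x: "x \<in> {0<..}" and y: "y \<in> {0<..}" and e: "gamma_hat M snr x = gamma_hat M snr y"
  show "x = y"
  proof (rule ccontr)
    assume "x \<noteq> y"
    then consider "x < y" | "y < x" by linarith
    then show False
      using gh_strict[OF assms, of x y] gh_strict[OF assms, of y x] x y e by cases auto
  qed
qed

theorem lemma7:
  fixes M :: "real measure" and snr :: real and K :: "real set"
  assumes "prob_space M"
    and "sets M = sets borel"
    and "compact K" and "K \<subseteq> {0..}"
    and "AE lam in M. lam \<in> K"
    and "(\<integral>lam. lam \<partial>M) = 1"
    and "snr > 0"
    and "inj_on (eta M snr) (eta_dom M snr)"
    and "gamma_hat M snr 1 < 1"
  shows "{rho. rho > 0 \<and> rho \<in> eta M snr ` eta_dom M snr \<and> phi_gau rho = eta_inv M snr rho}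
           = {1 / gamma_hat M snr 1 - 1}"
proof -
  have ae: "AE lam in M. lam \<ge> 0" using assms(5) by (rule eventually_mono) (use assms(4) in auto)
  note inj = gh_inj[OF assms(1,2) ae assms(7)]
  have ginv: "gamma_hat_inv M snr (gamma_hat M snr w) = w" if "w > 0" for w
    unfolding gamma_hat_inv_def using the_inv_into_f_f[OF inj] that by auto
  define g1 where "g1 = gamma_hat M snr 1"
  have g1pos: "0 < g1" unfolding g1_def using gh_pos[OF assms(1,2) ae assms(7)] by simp
  have g1lt: "g1 < 1" using assms(9) g1_def by simp
  have g1dom: "g1 \<in> eta_dom M snr" unfolding eta_dom_def g1_def by auto
  have etag1: "eta M snr g1 = 1 / g1 - 1"
    unfolding eta_def using ginv[of 1] g1_def by simp
  have etainv: "eta_inv M snr (eta M snr u) = u" if "u \<in> eta_dom M snr" for u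
    unfolding eta_inv_def using the_inv_into_f_f[OF assms(8) that] .
  show ?thesis
  proof (rule set_eqI, rule iffI)
    fix rho assume "rho \<in> {rho. rho > 0 \<and> rho \<in> eta M snr ` eta_dom M snr \<and> phi_gau rho = eta_inv M snr rho}"
    then obtain u where r: "rho > 0" and u: "u \<in> eta_dom M snr" and ru: "rho = eta M snr u"
      and ph: "phi_gau rho = eta_inv M snr rho" by auto
    from u obtain w where w: "w > 0" and uw: "u = gamma_hat M snr w" unfolding eta_dom_def by auto
    have "phi_gau rho = u" using ph etainv[OF u] ru by simp
    hence "1 / (1 + rho) = u" unfolding phi_gau_def .
    hence "1 / u = 1 / (1 / (1 + rho))" by simp
    hence u1: "1 / u = 1 + rho" by simp
    have "rho = 1 / u - 1 / w" using ru uw ginv[OF w] unfolding eta_def by simp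
    hence "1 / w = 1" using u1 by simp
    hence "w = 1" by (simp add: field_simps)
    hence "u = g1" using uw g1_def by simp
    then show "rho \<in> {1 / gamma_hat M snr 1 - 1}" using u1 g1_def by simp
  next
    fix rho assume "rho \<in> {1 / gamma_hat M snr 1 - 1}"
    hence rr: "rho = 1 / g1 - 1" using g1_def by simp
    have "1 < 1 / g1" using g1pos g1lt by (simp add: field_simps)
    hence "rho > 0" using rr by linarith
    moreover have "rho \<in> eta M snr ` eta_dom M snr" using rr etag1 g1dom by force
    moreover have "phi_gau rho = eta_inv M snr rho"
      using rr etag1 etainv[OF g1dom] g1pos unfolding phi_gau_def by simp
    ultimately show "rho \<in> {rho. rho > 0 \<and> rho \<in> eta M snr ` eta_dom M snr \<and> phi_gau rho = eta_inv M snr rho}"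
      by simp
  qed
qed

end
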